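(* Let $v=(v_{ij})$ be a complex $2\times2$ matrix with $\|v\|=1$ (i.e. $v\in\partial\mathcal R_I$). If $\pi(v)\in\partial\mathbb E$, then $|v_{12}|=|v_{21}|$.
   Context: $\|\cdot\|$ is the operator norm on $2\times2$ complex matrices, $\mathcal R_I=\{x:\|x\|<1\}$, $\pi(x)=(x_{11},x_{22},\det x)$, and the tetrablock is $\mathbb E=\pi(\mathcal R_I)=\{z\in\mathbb C^3:\ |z_2-\bar z_1z_3|+|z_1z_2-z_3|+|z_1|^2<1\}$. *)

theory Defs
  imports "HOL-Analysis.Analysis"
begin

definition opnorm :: "complex^2^2 \<Rightarrow> real" where
  "opnorm v = onorm (\<lambda>x::complex^2. v *v x)"

definition R_I :: "(complex^2^2) set" where
  "R_I = {x. opnorm x < 1}"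

definition tb_pi :: "complex^2^2 \<Rightarrow> complex \<times> complex \<times> complex" where
  "tb_pi x = (x $ 1 $ 1, x $ 2 $ 2, det x)"

definition tetrablock :: "(complex \<times> complex \<times> complex) set" where
  "tetrablock = tb_pi ` R_I"

end

theory Submission
  imports Defs
begin

definition S4 :: "complex \<Rightarrow> complex \<Rightarrow> complex \<Rightarrow> complex \<Rightarrow> real" where
  "S4 a b c d = cmod a^2 + cmod b^2 + cmod c^2 + cmod d^2"

definition good4 :: "complex \<Rightarrow> complex \<Rightarrow> complex \<Rightarrow> complex \<Rightarrow> bool" where
  "good4 a b c d \<longleftrightarrow> S4 a b c d < 2 \<and> 0 < 1 - S4 a b c d + cmod (a*d-b*c)^2"

definition mk :: "complex \<Rightarrow> complex \<Rightarrow> complex \<Rightarrow> complex \<Rightarrow> complex^2^2" where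
  "mk a b c d = (\<chi> i j. if i = 1 then (if j = 1 then a else b) else (if j = 1 then c else d))"

lemma mk_nth: "mk a b c d $ 1 $ 1 = a" "mk a b c d $ 1 $ 2 = b"
  "mk a b c d $ 2 $ 1 = c" "mk a b c d $ 2 $ 2 = d"
  by (simp_all add: mk_def)

lemma expand: fixes a b c d x1 x2 :: complex
  shows "cmod (a*x1+b*x2)^2 + cmod (c*x1+d*x2)^2 = (cmod a^2+cmod c^2)*cmod x1^2 + (cmod b^2 + cmod d^2)*cmod x2^2 + 2* Re (cnj x1 * x2 * (cnj a * b + cnj c * d))"
  unfolding cmod_power2 by (simp add: algebra_simps power2_eq_square)

lemma gram: fixes a b c d :: complex
  shows "(cmod a^2+cmod c^2)*(cmod b^2 + cmod d^2) - cmod (cnj a * b + cnj c * d)^2 = cmod (a*d-b*c)^2"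
  unfolding cmod_power2 by (simp add: algebra_simps power2_eq_square)

lemma norm2_vec: "norm (x::complex^2)^2 = cmod (x$1)^2 + cmod (x$2)^2"
  by (simp add: norm_vec_def L2_set_def sum_2)

lemma mv_mk: "(v *v x) $ 1 = v$1$1 * x$1 + v$1$2 * x$2" "(v *v x) $ 2 = v$2$1 * x$1 + v$2$2 * x$2"
  for v :: "complex^2^2"
  by (simp_all add: matrix_vector_mult_def sum_2)

lemma suff:
  fixes a b c d x1 x2 :: complex and K :: real
  assumes K0: "0 \<le> K" and h1: "S4 a b c d \<le> 2*K"
    and h2: "0 \<le> K^2 - K*S4 a b c d + cmod (a*d-b*c)^2"
  shows "cmod (a*x1+b*x2)^2 + cmod (c*x1+d*x2)^2 \<le> K*(cmod x1^2+cmod x2^2)"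
proof -
  define P where "P = cmod a^2+cmod c^2"
  define R where "R = cmod b^2 + cmod d^2"
  define Q where "Q = cnj a * b + cnj c * d"
  define m where "m = cmod x1"
  define n where "n = cmod x2"
  have g: "P*R - cmod Q^2 = cmod (a*d-b*c)^2" using gram unfolding P_def R_def Q_def by simp
  have S: "S4 a b c d = P + R" unfolding S4_def P_def R_def by simp
  have q: "(K-P)*(K-R) \<ge> cmod Q^2" using h2 g S by (simp add: algebra_simps power2_eq_square)
  have "0 \<le> (K-P)*(K-R)" using q by (meson order_trans zero_le_power2)
  then have KP: "K \<ge> P" and KR: "K \<ge> R"
  proof -
    assume pr0: "0 \<le> (K-P)*(K-R)"
    have s2: "P + R \<le> 2*K" using h1 S by simp
    show "K \<ge> P"
    proof (rule ccontr)
      assume "\<not> K \<ge> P"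
      then have "K - P < 0" "0 < K - R" using s2 by linarith+
      then have "(K-P)*(K-R) < 0" by (rule mult_neg_pos)
      then show False using pr0 by linarith
    qed
    show "K \<ge> R"
    proof (rule ccontr)
      assume "\<not> K \<ge> R"
      then have "0 < K - P" "K - R < 0" using s2 by linarith+
      then have "(K-P)*(K-R) < 0" by (rule mult_pos_neg)
      then show False using pr0 by linarith
    qed
  qed
  define p where "p = sqrt (K-P)"
  define r where "r = sqrt (K-R)"
  have pr: "p*r \<ge> cmod Q"
  proof -
    have "p*r = sqrt ((K-P)*(K-R))" by (simp add: p_def r_def real_sqrt_mult)
    moreover have "sqrt ((K-P)*(K-R)) \<ge> sqrt (cmod Q^2)" using q real_sqrt_le_mono by blast
    ultimately show ?thesis by simp
  qed
  have p2: "p^2 = K-P" using KP by (simp add: p_def)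
  have r2: "r^2 = K-R" using KR by (simp add: r_def)
  have re: "Re (cnj x1 * x2 * Q) \<le> m*n*cmod Q"
    using complex_Re_le_cmod[of "cnj x1 * x2 * Q"] by (simp add: norm_mult m_def n_def)
  have mn: "m \<ge> 0" "n \<ge> 0" by (simp_all add: m_def n_def)
  have "2*(m*n*cmod Q) \<le> 2*(m*n*(p*r))" using pr mn by (simp add: mult_left_mono)
  also have "\<dots> \<le> p^2*m^2 + r^2*n^2"
    using zero_le_power2[of "p*m - r*n"] by (simp add: algebra_simps power2_eq_square)
  finally have "2*(m*n*cmod Q) \<le> (K-P)*m^2 + (K-R)*n^2" using p2 r2 by simp
  then have fin: "2*(m*n*cmod Q) \<le> (K-P)*m^2 + (K-R)*n^2" .
  have E: "cmod (a*x1+b*x2)^2 + cmod (c*x1+d*x2)^2 = P*m^2 + R*n^2 + 2*Re (cnj x1*x2*Q)"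
    using expand[of a x1 b x2 c d] unfolding P_def R_def Q_def m_def n_def by simp
  have K2: "K*(m^2+n^2) = P*m^2+R*n^2 + ((K-P)*m^2+(K-R)*n^2)" by (simp add: algebra_simps)
  have "cmod (a*x1+b*x2)^2 + cmod (c*x1+d*x2)^2 \<le> K*(m^2+n^2)"
    unfolding E K2 using fin re by linarith
  then show ?thesis by (simp add: m_def n_def)
qed

lemma discr:
  fixes A C q :: real
  assumes "0 \<le> A" "0 \<le> C" "\<And>\<alpha> \<beta>. 0 \<le> A*\<alpha>^2 + C*\<beta>^2 - 2*q*\<alpha>*\<beta>"
  shows "q^2 \<le> A*C"
proof (cases "A = 0")
  case True
  have "0 \<le> C*q^2 - 2*q*(C+1)*q" using assms(3)[of "C+1" q] True by simp
  then have "0 \<le> - (q^2*(C+2))" by (simp add: algebra_simps power2_eq_square)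
  then have "q^2*(C+2) \<le> 0" by linarith
  then have "q^2 \<le> 0" using mult_le_cancel_right_pos[of "C+2" "q^2" 0] assms(2) by simp
  then have "q = 0" by simp
  then show ?thesis using assms by simp
next
  case False
  have "0 \<le> A*q^2 + C*A^2 - 2*q*q*A" using assms(3)[of q A] .
  then have "0 \<le> A*(A*C - q^2)" by (simp add: algebra_simps power2_eq_square)
  then show ?thesis using False assms(1)
    by (simp add: zero_le_mult_iff)
qed

lemma nec:
  fixes a b c d :: complex
  assumes H: "\<And>x1 x2. cmod (a*x1+b*x2)^2 + cmod (c*x1+d*x2)^2 \<le> cmod x1^2+cmod x2^2"
  shows "S4 a b c d \<le> 2 \<and> 0 \<le> 1 - S4 a b c d + cmod (a*d-b*c)^2"
proof -
  define P where "P = cmod a^2+cmod c^2"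
  define R where "R = cmod b^2 + cmod d^2"
  define Q where "Q = cnj a * b + cnj c * d"
  have g: "P*R - cmod Q^2 = cmod (a*d-b*c)^2" using gram unfolding P_def R_def Q_def by simp
  have S: "S4 a b c d = P + R" unfolding S4_def P_def R_def by simp
  have P1: "P \<le> 1" using H[of 1 0] by (simp add: P_def)
  have R1: "R \<le> 1" using H[of 0 1] by (simp add: R_def)
  have quad: "0 \<le> (1-P)*\<alpha>^2 + (1-R)*\<beta>^2 - 2*cmod Q*\<alpha>*\<beta>" for \<alpha> \<beta>
  proof (cases "Q = 0")
    case True
    then show ?thesis using P1 R1 by (simp add: mult_nonneg_nonneg)
  next
    case False
    define x1 where "x1 = complex_of_real \<alpha>"
    define x2 where "x2 = complex_of_real \<beta> * cnj Q / complex_of_real (cmod Q)"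
    have c1: "cmod x1 ^2 = \<alpha>^2" by (simp add: x1_def)
    have c2: "cmod x2 ^2 = \<beta>^2" using False by (simp add: x2_def norm_mult norm_divide)
    have cQ: "cnj Q * Q = (complex_of_real (cmod Q))^2"
      unfolding mult.commute[of "cnj Q" Q] of_real_power[symmetric] by (rule complex_norm_square[symmetric])
    have x2Q: "x2 * Q = complex_of_real (\<beta> * cmod Q)"
    proof -
      have "x2*Q = complex_of_real \<beta> * (cnj Q * Q) / complex_of_real (cmod Q)" by (simp add: x2_def)
      also have "\<dots> = complex_of_real \<beta> * (complex_of_real (cmod Q))^2 / complex_of_real (cmod Q)" using cQ by simp
      also have "\<dots> = complex_of_real (\<beta> * cmod Q)" using False by (simp add: power2_eq_square)
      finally show ?thesis .
    qed
    have "cnj x1 * x2 * Q = complex_of_real \<alpha> * (x2 * Q)" by (simp add: x1_def mult.assoc)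
    then have c3: "Re (cnj x1 * x2 * Q) = \<alpha>*\<beta>*cmod Q" by (simp add: x2Q)
    have E: "cmod (a*x1+b*x2)^2 + cmod (c*x1+d*x2)^2 = P*\<alpha>^2 + R*\<beta>^2 + 2*Re (cnj x1 * x2 * Q)"
      unfolding P_def R_def Q_def by (rule expand[of a x1 b x2 c d, unfolded c1 c2])
    have H': "cmod (a*x1+b*x2)^2 + cmod (c*x1+d*x2)^2 \<le> \<alpha>^2 + \<beta>^2"
      using H[of x1 x2] unfolding c1 c2 .
    have e3: "(1-P)*\<alpha>^2 + (1-R)*\<beta>^2 - 2*cmod Q*\<alpha>*\<beta> = (\<alpha>^2 + \<beta>^2) - (P*\<alpha>^2 + R*\<beta>^2 + 2*(\<alpha>*\<beta>*cmod Q))"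
      by (simp add: algebra_simps)
    show ?thesis unfolding e3 using H' E c3 by linarith
  qed
  have q: "cmod Q^2 \<le> (1-P)*(1-R)"
    using discr[of "1-P" "1-R" "cmod Q"] quad P1 R1 by simp
  have e4: "(1-P)*(1-R) = 1 - P - R + P*R" by (simp add: algebra_simps)
  show ?thesis using S g P1 R1 q e4 by linarith
qed

lemma good_opnorm:
  assumes "good4 a b c d"
  shows "opnorm (mk a b c d) < 1"
proof -
  define S where "S = S4 a b c d"
  define f where "f = 1 - S + cmod (a*d-b*c)^2"
  have S0: "S \<ge> 0" by (simp add: S_def S4_def)
  have hS: "S < 2" and hf: "f > 0" using assms by (simp_all add: good4_def S_def f_def)
  define e where "e = min (f/2) ((2-S)/2)"
  define K where "K = 1 - e"
  have e0: "e > 0" using hS hf by (simp add: e_def)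
  have K0: "0 \<le> K" "K < 1" using S0 e0 by (auto simp: K_def e_def min_le_iff_disj)
  have "e \<le> (2-S)/2" unfolding e_def by (rule min.cobounded2)
  then have h1: "S \<le> 2*K" by (simp add: K_def)
  have "e*(2-S) \<le> (f/2)*2" 
    by (rule mult_mono) (use S0 hS hf in \<open>auto simp: e_def\<close>)
  moreover have eq: "K^2 - K*S + cmod (a*d-b*c)^2 = f - e*(2-S) + e^2"
    unfolding K_def f_def by (simp add: algebra_simps power2_eq_square)
  ultimately have h2: "0 \<le> K^2 - K*S + cmod (a*d-b*c)^2"
    using zero_le_power2[of e] by linarith
  have "norm (mk a b c d *v x) \<le> sqrt K * norm x" for x
  proof -
    have "norm (mk a b c d *v x)^2 \<le> K * norm x^2"
      using suff[OF K0(1) h1[unfolded S_def] h2[unfolded S_def], of "x$1" "x$2"]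
      by (simp add: norm2_vec mv_mk mk_nth)
    then have "sqrt (norm (mk a b c d *v x)^2) \<le> sqrt (K * norm x^2)" by (rule real_sqrt_le_mono)
    then show ?thesis by (simp add: real_sqrt_mult)
  qed
  then have "opnorm (mk a b c d) \<le> sqrt K" unfolding opnorm_def by (rule onorm_le)
  also have "sqrt K < 1" using K0 by simp
  finally show ?thesis .
qed

lemma interior_pt:
  assumes g: "good4 a b c d" and b: "b \<noteq> 0"
  shows "(a, d, a*d - b*c) \<in> interior tetrablock"
proof -
  define F where "F = (\<lambda>z::complex\<times>complex\<times>complex. mk (fst z) b ((fst z * fst (snd z) - snd (snd z))/b) (fst (snd z)))"
  define U where "U = {z. good4 (fst z) b ((fst z * fst (snd z) - snd (snd z))/b) (fst (snd z))}"
  have "open U"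
    unfolding U_def good4_def S4_def Collect_conj_eq[symmetric]
    by (intro open_Collect_conj open_Collect_less continuous_intros) (use b in auto)
  moreover have "(a, d, a*d - b*c) \<in> U"
    using g b by (simp add: U_def)
  moreover have "U \<subseteq> tetrablock"
  proof
    fix z assume z: "z \<in> U"
    have "F z \<in> R_I" using good_opnorm z by (simp add: R_I_def F_def U_def)
    moreover have "tb_pi (F z) = z" using b
      by (cases z) (simp add: tb_pi_def F_def mk_nth det_2)
    ultimately show "z \<in> tetrablock" unfolding tetrablock_def by (metis image_eqI)
  qed
  ultimately show ?thesis by (meson interior_maximal subsetD)
qed

theorem lemma9:
  fixes v :: "complex^2^2"
  assumes "opnorm v = 1"
    and "tb_pi v \<in> frontier tetrablock"
  shows "cmod (v $ 1 $ 2) = cmod (v $ 2 $ 1)"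
proof (rule ccontr)
  assume ne: "cmod (v $ 1 $ 2) \<noteq> cmod (v $ 2 $ 1)"
  define a where "a = v$1$1"
  define b where "b = v$1$2"
  define c where "c = v$2$1"
  define d where "d = v$2$2"
  have H: "cmod (a*x1+b*x2)^2 + cmod (c*x1+d*x2)^2 \<le> cmod x1^2+cmod x2^2" for x1 x2
  proof -
    define x :: "complex^2" where "x = (\<chi> i. if i = 1 then x1 else x2)"
    have "norm (v *v x) \<le> 1 * norm x"
      using onorm[OF matrix_vector_mul_bounded_linear[of v], of x] assms(1)
      by (simp add: opnorm_def)
    then have "norm (v *v x)^2 \<le> norm x^2" by (simp add: power_mono)
    then show ?thesis by (simp add: norm2_vec mv_mk x_def a_def b_def c_def d_def)
  qed
  have N: "S4 a b c d \<le> 2" "0 \<le> 1 - S4 a b c d + cmod (a*d-b*c)^2" using nec[OF H] by auto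
  have ne': "cmod b \<noteq> cmod c" using ne by (simp add: b_def c_def)
  obtain \<beta> \<gamma> where bg: "\<beta>*\<gamma> = b*c" "cmod \<beta>^2 + cmod \<gamma>^2 < cmod b^2 + cmod c^2" "\<beta> \<noteq> 0 \<or> \<gamma> \<noteq> 0"
  proof (cases "b = 0 \<or> c = 0")
    case True
    show ?thesis
    proof (rule that[of "b/2" "c/2"])
      show "b/2 * (c/2) = b*c" using True by auto
      show "cmod (b/2)^2 + cmod (c/2)^2 < cmod b^2 + cmod c^2"
        using ne' True by (auto simp: norm_divide power_divide)
      show "b/2 \<noteq> 0 \<or> c/2 \<noteq> 0" using ne' True by auto
    qed
  next
    case False
    then have b0: "cmod b > 0" and c0: "cmod c > 0" by auto
    show ?thesis
    proof (rule that[of "b * complex_of_real (sqrt (cmod c / cmod b))" "c * complex_of_real (sqrt (cmod b / cmod c))"])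
      have "sqrt (cmod c / cmod b) * sqrt (cmod b / cmod c) = sqrt ((cmod c / cmod b) * (cmod b / cmod c))"
        by (rule real_sqrt_mult[symmetric])
      also have "\<dots> = 1" using b0 c0 by simp
      finally have sq1: "sqrt (cmod c / cmod b) * sqrt (cmod b / cmod c) = 1" .
      then show "b * complex_of_real (sqrt (cmod c / cmod b)) * (c * complex_of_real (sqrt (cmod b / cmod c))) = b*c"
        by (metis (no_types, lifting) sq1 mult.assoc mult.left_commute mult.right_neutral of_real_1 of_real_mult)
      have s1: "sqrt (cmod c / cmod b)^2 = cmod c / cmod b" using b0 c0 by simp
      have s2: "sqrt (cmod b / cmod c)^2 = cmod b / cmod c" using b0 c0 by simp
      have e1: "cmod (b * complex_of_real (sqrt (cmod c / cmod b)))^2 = cmod b * cmod c"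
        unfolding norm_mult power_mult_distrib norm_of_real power2_abs s1 using b0
        by (simp add: power2_eq_square)
      have e2: "cmod (c * complex_of_real (sqrt (cmod b / cmod c)))^2 = cmod b * cmod c"
        unfolding norm_mult power_mult_distrib norm_of_real power2_abs s2 using c0
        by (simp add: power2_eq_square)
      have "0 < (cmod b - cmod c)^2" using ne' by simp
      then show "cmod (b * complex_of_real (sqrt (cmod c / cmod b)))^2 + cmod (c * complex_of_real (sqrt (cmod b / cmod c)))^2 < cmod b^2 + cmod c^2"
        unfolding e1 e2 by (simp add: power2_eq_square algebra_simps)
      show "b * complex_of_real (sqrt (cmod c / cmod b)) \<noteq> 0 \<or> c * complex_of_real (sqrt (cmod b / cmod c)) \<noteq> 0"
        using False b0 c0 by simp
    qed
  qed
  have G: "good4 a \<beta> \<gamma> d"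
    using N bg(1,2) unfolding good4_def S4_def by (simp add: mult.commute)
  have G': "good4 a \<gamma> \<beta> d"
    using G unfolding good4_def S4_def by (simp add: mult.commute add.commute add.left_commute)
  have "(a, d, a*d - b*c) \<in> interior tetrablock"
  proof (cases "\<beta> = 0")
    case False
    then show ?thesis using interior_pt[OF G False] bg(1) by simp
  next
    case True
    then have "\<gamma> \<noteq> 0" using bg(3) by simp
    then show ?thesis using interior_pt[OF G' \<open>\<gamma> \<noteq> 0\<close>] bg(1) by (simp add: mult.commute)
  qed
  moreover have "tb_pi v = (a, d, a*d - b*c)" by (simp add: tb_pi_def det_2 a_def b_def c_def d_def)
  ultimately show False using assms(2) by (simp add: frontier_def)
qed

end
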